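(* Let $P=\{x=x_1+x_2i+x_3j+x_4ij\in C_2:\ x_1x_4=x_2x_3,\ x\neq 0\}$. Then $P$, with the bicomplex number product, is a Lie group.
   Context: $C_2$ denotes the bicomplex numbers: the real algebra with basis $\{1,i,j,ij\}$, $i^2=j^2=-1$, $ij=ji$, identified with $\mathbb{R}^4$ via $x=x_1+x_2i+x_3j+x_4ij\leftrightarrow(x_1,x_2,x_3,x_4)$. The product is $x\times y=(x_1y_1-x_2y_2-x_3y_3+x_4y_4)+(x_1y_2+x_2y_1-x_3y_4-x_4y_3)i+(x_1y_3+x_3y_1-x_2y_4-x_4y_2)j+(x_1y_4+x_4y_1+x_2y_3+x_3y_2)ij$. *)

theory Defs
  imports "HOL-Analysis.Analysis" "HOL-Algebra.Group"
begin

text \<open>Bicomplex numbers C2 identified with real^4: x = x1 + x2 i + x3 j + x4 ij.\<close>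

definition bc_mult :: "real^4 \<Rightarrow> real^4 \<Rightarrow> real^4" where
  "bc_mult x y = vector
     [x$1*y$1 - x$2*y$2 - x$3*y$3 + x$4*y$4,
      x$1*y$2 + x$2*y$1 - x$3*y$4 - x$4*y$3,
      x$1*y$3 + x$3*y$1 - x$2*y$4 - x$4*y$2,
      x$1*y$4 + x$4*y$1 + x$2*y$3 + x$3*y$2]"

definition bc_one :: "real^4" where
  "bc_one = vector [1, 0, 0, 0]"

fun Ck_on :: "nat \<Rightarrow> 'a::euclidean_space set \<Rightarrow> ('a \<Rightarrow> 'b::real_normed_vector) \<Rightarrow> bool" where
  "Ck_on 0 S f = continuous_on S f"
| "Ck_on (Suc k) S f =
     (\<exists>f'. (\<forall>x\<in>S. (f has_derivative f' x) (at x)) \<and> (\<forall>v\<in>Basis. Ck_on k S (\<lambda>x. f' x v)))"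

definition smooth_on :: "'a::euclidean_space set \<Rightarrow> ('a \<Rightarrow> 'b::real_normed_vector) \<Rightarrow> bool" where
  "smooth_on S f \<longleftrightarrow> open S \<and> (\<forall>k. Ck_on k S f)"

definition diffeo_betw :: "'a::euclidean_space set \<Rightarrow> 'a set \<Rightarrow> ('a \<Rightarrow> 'a) \<Rightarrow> bool" where
  "diffeo_betw U V \<phi> \<longleftrightarrow> open U \<and> open V \<and> bij_betw \<phi> U V \<and>
     smooth_on U \<phi> \<and> smooth_on V (inv_into U \<phi>)"

definition embedded_submanifold :: "nat \<Rightarrow> 'a::euclidean_space set \<Rightarrow> bool" where
  "embedded_submanifold k M \<longleftrightarrow>
     (\<forall>p\<in>M. \<exists>U V \<phi>. p \<in> U \<and> diffeo_betw U V \<phi> \<and>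
        (\<exists>B\<subseteq>Basis. card B = k \<and>
           \<phi> ` (U \<inter> M) = V \<inter> {y. \<forall>i\<in>Basis - B. y \<bullet> i = 0}))"

text \<open>A subset G of a Euclidean space with a binary operation m and unit e is a Lie group
  (with the induced embedded-submanifold structure): it is a group, an embedded
  submanifold, and multiplication and inversion are smooth (i.e. extend to smooth
  maps on open neighbourhoods in the ambient space).\<close>
definition embedded_lie_group :: "('a \<Rightarrow> 'a \<Rightarrow> 'a) \<Rightarrow> 'a \<Rightarrow> 'a::euclidean_space set \<Rightarrow> bool" where
  "embedded_lie_group m e G \<longleftrightarrow>
     group \<lparr>carrier = G, mult = m, one = e\<rparr> \<and>
     (\<exists>k. embedded_submanifold k G) \<and>
     (\<exists>W m'. G \<times> G \<subseteq> W \<and> smooth_on W m' \<and> (\<forall>x\<in>G. \<forall>y\<in>G. m' (x, y) = m x y)) \<and>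
     (\<exists>U i. G \<subseteq> U \<and> smooth_on U i \<and>
        (\<forall>x\<in>G. i x = inv\<^bsub>\<lparr>carrier = G, mult = m, one = e\<rparr>\<^esub> x))"

definition P_set :: "(real^4) set" where
  "P_set = {x. x$1 * x$4 = x$2 * x$3 \<and> x \<noteq> 0}"

end

theory Submission
  imports Defs
begin


lemma vector_4 [simp]:
 "(vector [x,y,z,w] ::('a::zero)^4)$1 = x"
 "(vector [x,y,z,w] ::('a::zero)^4)$2 = y"
 "(vector [x,y,z,w] ::('a::zero)^4)$3 = z"
 "(vector [x,y,z,w] ::('a::zero)^4)$4 = w"
  unfolding vector_def by simp_all

lemma vec4_eq: "(v::'a^4) = w \<longleftrightarrow> v$1 = w$1 \<and> v$2 = w$2 \<and> v$3 = w$3 \<and> v$4 = w$4"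
  by (auto simp: vec_eq_iff forall_4)

lemma Ck_mono: "Ck_on (Suc k) S f \<Longrightarrow> Ck_on k S f"
proof (induction k arbitrary: f)
  case 0
  then show ?case
    by (auto intro!: continuous_at_imp_continuous_on dest!: has_derivative_continuous)
next
  case (Suc k)
  then obtain f' where "\<forall>x\<in>S. (f has_derivative f' x) (at x)" "\<forall>v\<in>Basis. Ck_on (Suc k) S (\<lambda>x. f' x v)"
    by auto
  then show ?case using Suc.IH by auto
qed

lemma Ck_const: "Ck_on k S (\<lambda>x. c)"
proof (induction k arbitrary: c)
  case 0 then show ?case by simp
next
  case (Suc k)
  show ?case by (auto intro!: exI[of _ "\<lambda>x v. 0"] Suc)
qed

lemma Ck_linear: "bounded_linear L \<Longrightarrow> Ck_on k S L"
proof (cases k)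
  case 0
  assume "bounded_linear L" then show ?thesis using 0
    by (simp add: linear_continuous_on)
next
  case (Suc m)
  assume "bounded_linear L"
  then show ?thesis using Suc
    by (auto intro!: exI[of _ "\<lambda>x. L"] Ck_const bounded_linear_imp_has_derivative)
qed

lemma Ck_comp_linear: "bounded_linear L \<Longrightarrow> Ck_on k S f \<Longrightarrow> Ck_on k S (\<lambda>x. L (f x))"
proof (induction k arbitrary: f)
  case 0 then show ?case
    using continuous_on_compose[of S f L] linear_continuous_on[of L]
    by (auto simp: o_def intro: continuous_on_subset)
next
  case (Suc k)
  then obtain f' where f': "\<forall>x\<in>S. (f has_derivative f' x) (at x)" "\<forall>v\<in>Basis. Ck_on k S (\<lambda>x. f' x v)"
    by auto
  show ?case
    apply simp
    apply (rule exI[of _ "\<lambda>x v. L (f' x v)"])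
    using f' Suc.IH Suc.prems(1)
    by (auto intro: bounded_linear.has_derivative)
qed

lemma Ck_add: "Ck_on k S f \<Longrightarrow> Ck_on k S g \<Longrightarrow> Ck_on k S (\<lambda>x. f x + g x)"
proof (induction k arbitrary: f g)
  case 0 then show ?case by (auto intro: continuous_on_add)
next
  case (Suc k)
  then obtain f' g' where f': "\<forall>x\<in>S. (f has_derivative f' x) (at x)" "\<forall>v\<in>Basis. Ck_on k S (\<lambda>x. f' x v)"
    and g': "\<forall>x\<in>S. (g has_derivative g' x) (at x)" "\<forall>v\<in>Basis. Ck_on k S (\<lambda>x. g' x v)"
    by auto
  show ?case
    apply simp
    apply (rule exI[of _ "\<lambda>x v. f' x v + g' x v"])
    using f' g' Suc.IH
    by (auto intro: has_derivative_add)
qed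

lemma Ck_mult: "Ck_on k S f \<Longrightarrow> Ck_on k S g \<Longrightarrow> Ck_on k S (\<lambda>x. f x * g x :: real)"
proof (induction k arbitrary: f g)
  case 0 then show ?case by (auto intro: continuous_on_mult)
next
  case (Suc k)
  then obtain f' g' where f': "\<forall>x\<in>S. (f has_derivative f' x) (at x)" "\<forall>v\<in>Basis. Ck_on k S (\<lambda>x. f' x v)"
    and g': "\<forall>x\<in>S. (g has_derivative g' x) (at x)" "\<forall>v\<in>Basis. Ck_on k S (\<lambda>x. g' x v)"
    by auto
  have fk: "Ck_on k S f" "Ck_on k S g" using Ck_mono[OF Suc.prems(1)] Ck_mono[OF Suc.prems(2)] by auto
  show ?case
    apply simp
    apply (rule exI[of _ "\<lambda>x v. f x * g' x v + f' x v * g x"])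
    using f' g' Suc.IH fk
    by (auto intro!: has_derivative_mult Ck_add)
qed

lemma Ck_inverse: "Ck_on k S f \<Longrightarrow> (\<forall>x\<in>S. f x \<noteq> 0) \<Longrightarrow> Ck_on k S (\<lambda>x. inverse (f x) :: real)"
proof (induction k arbitrary: f)
  case 0 then show ?case by (auto intro: continuous_on_inverse)
next
  case (Suc k)
  then obtain f' where f': "\<forall>x\<in>S. (f has_derivative f' x) (at x)" "\<forall>v\<in>Basis. Ck_on k S (\<lambda>x. f' x v)"
    by auto
  have fk: "Ck_on k S f" using Ck_mono[OF Suc.prems(1)] by auto
  have IH: "Ck_on k S (\<lambda>x. inverse (f x))" using Suc.IH fk Suc.prems by auto
  have d: "((\<lambda>x. inverse (f x)) has_derivative (\<lambda>v. - (inverse (f x) * f' x v * inverse (f x)))) (at x)"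
    if "x \<in> S" for x
    using Deriv.has_derivative_inverse[OF _ f'(1)[rule_format, OF that]] Suc.prems(2) that by auto
  show ?case
    apply simp
    apply (rule exI[of _ "\<lambda>x v. - (inverse (f x) * f' x v * inverse (f x))"])
    using d f' IH
    by (auto intro!: Ck_mult Ck_comp_linear[where L=uminus] bounded_linear_minus bounded_linear_ident)
qed

lemma Ck_cong: "open S \<Longrightarrow> Ck_on k S f \<Longrightarrow> (\<forall>x\<in>S. f x = g x) \<Longrightarrow> Ck_on k S g"
proof (induction k arbitrary: f g)
  case 0 then show ?case using continuous_on_cong by (metis Ck_on.simps(1))
next
  case (Suc k)
  then obtain f' where f': "\<forall>x\<in>S. (f has_derivative f' x) (at x)" "\<forall>v\<in>Basis. Ck_on k S (\<lambda>x. f' x v)"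
    by auto
  show ?case
    apply simp
    apply (rule exI[of _ f'])
    using f' Suc.prems
    by (auto intro: has_derivative_transform_within_open)
qed



lemma bc_mult_nth [simp]:
  "bc_mult x y $ 1 = x$1*y$1 - x$2*y$2 - x$3*y$3 + x$4*y$4"
  "bc_mult x y $ 2 = x$1*y$2 + x$2*y$1 - x$3*y$4 - x$4*y$3"
  "bc_mult x y $ 3 = x$1*y$3 + x$3*y$1 - x$2*y$4 - x$4*y$2"
  "bc_mult x y $ 4 = x$1*y$4 + x$4*y$1 + x$2*y$3 + x$3*y$2"
  by (simp_all add: bc_mult_def)

lemma bc_one_nth [simp]: "bc_one$1 = 1" "bc_one$2 = 0" "bc_one$3 = 0" "bc_one$4 = 0"
  by (simp_all add: bc_one_def)

definition bA :: "real^4 \<Rightarrow> real" where "bA x = x$1*x$1 - x$2*x$2 + x$3*x$3 - x$4*x$4"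
definition bB :: "real^4 \<Rightarrow> real" where "bB x = 2*(x$1*x$2 + x$3*x$4)"
definition bD :: "real^4 \<Rightarrow> real" where "bD x = bA x * bA x + bB x * bB x"

definition bw :: "real^4 \<Rightarrow> real^4" where
  "bw x = vector [x$1*bA x + x$2*bB x, x$2*bA x - x$1*bB x,
     -(x$3*bA x + x$4*bB x), -(x$4*bA x - x$3*bB x)]"

definition bc_inv :: "real^4 \<Rightarrow> real^4" where
  "bc_inv x = inverse (bD x) *\<^sub>R bw x"

lemma bc_mult_scaleR: "bc_mult (c *\<^sub>R w) x = c *\<^sub>R bc_mult w x"
  unfolding vec4_eq by (simp add: algebra_simps)

lemma bw_mult: "bc_mult (bw x) x = bD x *\<^sub>R bc_one"
  unfolding vec4_eq by (simp add: bw_def bD_def bA_def bB_def) algebra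

lemma bw_P: "x$1*x$4 = x$2*x$3 \<Longrightarrow> bw x $1 * bw x $4 = bw x $2 * bw x $3"
  by (simp add: bw_def bA_def bB_def) algebra

lemma bD_id: "bD x = (x$1*x$1+x$2*x$2+x$3*x$3+x$4*x$4)^2 - 4*(x$1*x$4 - x$2*x$3)^2"
  unfolding bD_def bA_def bB_def by algebra

lemma nonzero4: "(x::real^4) \<noteq> 0 \<longleftrightarrow> x$1 \<noteq> 0 \<or> x$2 \<noteq> 0 \<or> x$3 \<noteq> 0 \<or> x$4 \<noteq> 0"
  by (auto simp: vec4_eq)

lemma bD_pos: assumes "x \<in> P_set" shows "bD x > 0"
proof -
  have f: "x$1*x$4 = x$2*x$3" and nz: "x$1 \<noteq> 0 \<or> x$2 \<noteq> 0 \<or> x$3 \<noteq> 0 \<or> x$4 \<noteq> 0"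
    using assms nonzero4[of x] by (auto simp: P_set_def)
  have "x$1*x$1+x$2*x$2+x$3*x$3+x$4*x$4 > 0"
  proof -
    have sq: "\<And>a::real. a \<noteq> 0 \<Longrightarrow> a*a > 0" using not_real_square_gt_zero by blast
    have nn: "0 \<le> x$1*x$1" "0 \<le> x$2*x$2" "0 \<le> x$3*x$3" "0 \<le> x$4*x$4" by simp_all
    from nz show ?thesis
    proof (elim disjE)
      assume "x$1 \<noteq> 0" then show ?thesis using sq[of "x$1"] nn by linarith
    next
      assume "x$2 \<noteq> 0" then show ?thesis using sq[of "x$2"] nn by linarith
    next
      assume "x$3 \<noteq> 0" then show ?thesis using sq[of "x$3"] nn by linarith
    next
      assume "x$4 \<noteq> 0" then show ?thesis using sq[of "x$4"] nn by linarith
    qed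
  qed
  then show ?thesis unfolding bD_id using f by simp
qed

lemma bc_inv_left: assumes "bD x \<noteq> 0" shows "bc_mult (bc_inv x) x = bc_one"
  using assms by (simp add: bc_inv_def bc_mult_scaleR bw_mult)

lemma bc_assoc: "bc_mult (bc_mult x y) z = bc_mult x (bc_mult y z)"
  unfolding vec4_eq by simp algebra

lemma bc_one_left: "bc_mult bc_one x = x"
  unfolding vec4_eq by simp

lemma bc_P_closed_eq:
  assumes "x$1*x$4 = x$2*x$3" "y$1*y$4 = y$2*y$3"
  shows "bc_mult x y $ 1 * bc_mult x y $ 4 = bc_mult x y $ 2 * bc_mult x y $ 3"
  using assms by simp algebra

lemma bc_inv_P: assumes "x \<in> P_set" shows "bc_inv x \<in> P_set"
proof -
  have D: "bD x \<noteq> 0" using bD_pos[OF assms] by simp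
  have f: "x$1*x$4 = x$2*x$3" using assms by (simp add: P_set_def)
  have "bc_inv x \<noteq> 0"
  proof
    assume "bc_inv x = 0"
    then have "bc_mult (bc_inv x) x $ 1 = 0" by simp
    then show False using bc_inv_left[OF D] by simp
  qed
  moreover have "bc_inv x $1 * bc_inv x $4 = bc_inv x $2 * bc_inv x $3"
    unfolding bc_inv_def using bw_P[OF f] by simp
  ultimately show ?thesis by (simp add: P_set_def)
qed

lemma bc_mult_P: assumes "x \<in> P_set" "y \<in> P_set" shows "bc_mult x y \<in> P_set"
proof -
  have "bc_mult x y \<noteq> 0"
  proof
    assume "bc_mult x y = 0"
    then have "bc_mult (bc_inv x) (bc_mult x y) = 0" by (simp add: vec4_eq)
    then have "y = 0" using bD_pos[OF assms(1)] bc_inv_left[of x]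
      by (simp add: bc_assoc[symmetric] bc_one_left)
    then show False using assms by (simp add: P_set_def)
  qed
  then show ?thesis using assms bc_P_closed_eq[of x y] by (simp add: P_set_def)
qed

definition GP where "GP = \<lparr>carrier = P_set, mult = bc_mult, one = bc_one\<rparr>"

lemma group_P: "group GP"
  unfolding GP_def
proof (rule groupI, goal_cases)
  case (1 x y) then show ?case by (simp add: bc_mult_P)
next
  case 2 then show ?case by (simp add: P_set_def vec4_eq)
next
  case (3 x y z) then show ?case by (simp add: bc_assoc)
next
  case (4 x) then show ?case by (simp add: bc_one_left)
next
  case (5 x) then show ?case
    using bc_inv_P[of x] bc_inv_left[of x] bD_pos[of x] by force
qed

lemma inv_P: "x \<in> P_set \<Longrightarrow> inv\<^bsub>GP\<^esub> x = bc_inv x"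
  using group.inv_equality[OF group_P, of "bc_inv x" x] bc_inv_P[of x] bc_inv_left[of x] bD_pos[of x]
  by (simp add: GP_def)



lemma Ck_nth: "Ck_on k S (\<lambda>x. x $ i)"
  by (rule Ck_linear) (rule bounded_linear_vec_nth)

lemma Ck_fst_nth: "Ck_on k S (\<lambda>p. fst p $ i)"
  by (rule Ck_comp_linear[where L="\<lambda>v. v $ i" and f=fst, OF bounded_linear_vec_nth Ck_linear[OF bounded_linear_fst]])

lemma Ck_snd_nth: "Ck_on k S (\<lambda>p. snd p $ i)"
  by (rule Ck_comp_linear[where L="\<lambda>v. v $ i" and f=snd, OF bounded_linear_vec_nth Ck_linear[OF bounded_linear_snd]])

lemma Ck_uminus: "Ck_on k S f \<Longrightarrow> Ck_on k S (\<lambda>x. - f x)"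
  by (rule Ck_comp_linear[OF bounded_linear_minus[OF bounded_linear_ident], simplified])

lemma Ck_diff: "Ck_on k S f \<Longrightarrow> Ck_on k S g \<Longrightarrow> Ck_on k S (\<lambda>x. f x - g x)"
  using Ck_add[OF _ Ck_uminus, of k S f g] by simp

lemma Ck_divide: "Ck_on k S f \<Longrightarrow> Ck_on k S g \<Longrightarrow> (\<forall>x\<in>S. g x \<noteq> 0) \<Longrightarrow> Ck_on k S (\<lambda>x. f x / g x :: real)"
  using Ck_mult[OF _ Ck_inverse, of k S f g] by (simp add: divide_inverse)

lemma Ck_scaleR_const: "Ck_on k S f \<Longrightarrow> Ck_on k S (\<lambda>x. f x *\<^sub>R (c::'b::real_normed_vector))"
  by (rule Ck_comp_linear[OF bounded_linear_scaleR_left])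

lemma vector4_axis: "(vector [a,b,c,d] :: real^4) = a *\<^sub>R axis 1 1 + b *\<^sub>R axis 2 1 + c *\<^sub>R axis 3 1 + d *\<^sub>R axis 4 1"
  unfolding vec4_eq by (simp add: axis_def)

lemma Ck_vec4: "Ck_on k S f1 \<Longrightarrow> Ck_on k S f2 \<Longrightarrow> Ck_on k S f3 \<Longrightarrow> Ck_on k S f4 \<Longrightarrow>
   Ck_on k S (\<lambda>x. vector [f1 x, f2 x, f3 x, f4 x] :: real^4)"
  unfolding vector4_axis by (intro Ck_add Ck_scaleR_const)

lemmas Ck_intros = Ck_vec4 Ck_add Ck_diff Ck_mult Ck_uminus Ck_nth Ck_fst_nth Ck_snd_nth Ck_const

lemma smooth_mult: "smooth_on UNIV (\<lambda>p. bc_mult (fst p) (snd p))"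
  unfolding smooth_on_def bc_mult_def by (auto intro!: Ck_intros)

lemma Ck_bD: "Ck_on k S bD"
  unfolding bD_def bA_def bB_def by (auto intro!: Ck_intros)

lemma open_U: "open {x. bD x \<noteq> 0}"
proof -
  have "continuous_on UNIV bD" using Ck_bD[of 0 UNIV] by simp
  then show ?thesis using open_Collect_neq[of bD "\<lambda>x. 0"] by auto
qed

lemma bc_inv_vec: "bc_inv x = vector [bw x $1 / bD x, bw x $2 / bD x, bw x $3 / bD x, bw x $4 / bD x]"
  unfolding vec4_eq bc_inv_def by (simp add: divide_inverse)

lemma smooth_inv: "smooth_on {x. bD x \<noteq> 0} bc_inv"
  unfolding smooth_on_def bc_inv_vec
  using open_U by (auto intro!: Ck_intros Ck_divide Ck_bD simp: bw_def bA_def bB_def)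



lemma chart_lemma:
  fixes \<phi> \<psi> :: "real^4 \<Rightarrow> real^4"
  assumes oU: "open U" and oV: "open V"
    and s\<phi>: "\<And>k. Ck_on k U \<phi>" and s\<psi>: "\<And>k. Ck_on k V \<psi>"
    and \<phi>U: "\<And>x. x \<in> U \<Longrightarrow> \<phi> x \<in> V" and \<psi>V: "\<And>y. y \<in> V \<Longrightarrow> \<psi> y \<in> U"
    and l: "\<And>x. x \<in> U \<Longrightarrow> \<psi> (\<phi> x) = x" and r: "\<And>y. y \<in> V \<Longrightarrow> \<phi> (\<psi> y) = y"
    and pU: "p \<in> U" and c: "c \<in> Basis"
    and PU: "\<And>x. x \<in> U \<Longrightarrow> x \<in> P_set \<longleftrightarrow> \<phi> x \<bullet> c = 0"
  shows "\<exists>U V \<phi>. p \<in> U \<and> diffeo_betw U V \<phi> \<and>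
        (\<exists>B\<subseteq>Basis. card B = 3 \<and>
           \<phi> ` (U \<inter> P_set) = V \<inter> {y. \<forall>i\<in>Basis - B. y \<bullet> i = 0})"
proof (intro exI conjI)
  show "p \<in> U" by fact
  have inj: "inj_on \<phi> U" by (rule inj_on_inverseI[where g=\<psi>]) (rule l)
  have bij: "bij_betw \<phi> U V"
    by (rule bij_betw_byWitness[where f'=\<psi>]) (use \<phi>U \<psi>V l r in blast)+
  have inv: "\<forall>y\<in>V. \<psi> y = inv_into U \<phi> y"
    using inv_into_f_eq[OF inj \<psi>V r] by auto
  show "diffeo_betw U V \<phi>"
    unfolding diffeo_betw_def smooth_on_def
    using oU oV bij s\<phi> Ck_cong[OF oV s\<psi> inv] by blast
  show "Basis - {c} \<subseteq> Basis" by auto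
  have "card (Basis :: (real^4) set) = 4" by simp
  then show "card (Basis - {c}) = 3" using c by (simp add: card_Diff_singleton)
  have B: "Basis - (Basis - {c}) = {c}" using c by auto
  show "\<phi> ` (U \<inter> P_set) = V \<inter> {y. \<forall>i\<in>Basis - (Basis - {c}). y \<bullet> i = 0}"
    unfolding B
  proof (intro equalityI subsetI)
    fix y assume "y \<in> \<phi> ` (U \<inter> P_set)"
    then obtain x where "x \<in> U" "x \<in> P_set" "y = \<phi> x" by blast
    then show "y \<in> V \<inter> {y. \<forall>i\<in>{c}. y \<bullet> i = 0}" using \<phi>U PU by blast
  next
    fix y assume y: "y \<in> V \<inter> {y. \<forall>i\<in>{c}. y \<bullet> i = 0}"
    then have yV: "y \<in> V" and yc: "y \<bullet> c = 0" by auto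
    have "\<psi> y \<in> U" using \<psi>V yV by blast
    moreover have "\<psi> y \<in> P_set" using PU[OF \<open>\<psi> y \<in> U\<close>] r[OF yV] yc by simp
    ultimately have "\<phi> (\<psi> y) \<in> \<phi> ` (U \<inter> P_set)" by blast
    then show "y \<in> \<phi> ` (U \<inter> P_set)" using r[OF yV] by simp
  qed
qed

lemma inner_ax: "y \<bullet> axis i (1::real) = y $ i"
  by (simp add: inner_axis)

lemma axB: "axis i (1::real) \<in> Basis" by simp

lemma in_P_iff: "x$i \<noteq> 0 \<Longrightarrow> x \<in> P_set \<longleftrightarrow> x$1*x$4 - x$2*x$3 = 0"
  by (auto simp: P_set_def)

lemma open_ne: "open {x::real^4. x$i \<noteq> 0}"
  using open_Collect_neq[of "\<lambda>x::real^4. x$i" "\<lambda>x. 0"]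
  by (auto intro: linear_continuous_on bounded_linear_vec_nth)

lemma submanifold_P: "embedded_submanifold 3 P_set"
  unfolding embedded_submanifold_def
proof
  fix p assume p: "p \<in> P_set"
  then have "p$1 \<noteq> 0 \<or> p$2 \<noteq> 0 \<or> p$3 \<noteq> 0 \<or> p$4 \<noteq> 0" by (simp add: P_set_def nonzero4)
  then show "\<exists>U V \<phi>. p \<in> U \<and> diffeo_betw U V \<phi> \<and>
        (\<exists>B\<subseteq>Basis. card B = 3 \<and> \<phi> ` (U \<inter> P_set) = V \<inter> {y. \<forall>i\<in>Basis - B. y \<bullet> i = 0})"
  proof (elim disjE)
    assume h: "p$1 \<noteq> 0"
    show ?thesis
      apply (rule chart_lemma[where U="{x. x$1 \<noteq> 0}" and V="{x. x$1 \<noteq> 0}"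
          and \<phi>="\<lambda>x. vector [x$1, x$2, x$3, x$1*x$4 - x$2*x$3]"
          and \<psi>="\<lambda>y. vector [y$1, y$2, y$3, (y$4 + y$2*y$3) / y$1]" and c="axis 4 1"])
      subgoal by (rule open_ne)
      subgoal by (rule open_ne)
      subgoal by (intro Ck_intros)
      subgoal by (auto intro!: Ck_intros Ck_divide)
      subgoal by simp
      subgoal by simp
      subgoal by (simp add: vec4_eq field_simps)
      subgoal by (simp add: vec4_eq field_simps)
      subgoal using h by simp
      subgoal by (rule axB)
      subgoal by (simp add: inner_ax in_P_iff)
      done
  next
    assume h: "p$2 \<noteq> 0"
    show ?thesis
      apply (rule chart_lemma[where U="{x. x$2 \<noteq> 0}" and V="{x. x$2 \<noteq> 0}"
          and \<phi>="\<lambda>x. vector [x$1, x$2, x$1*x$4 - x$2*x$3, x$4]"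
          and \<psi>="\<lambda>y. vector [y$1, y$2, (y$1*y$4 - y$3) / y$2, y$4]" and c="axis 3 1"])
      subgoal by (rule open_ne)
      subgoal by (rule open_ne)
      subgoal by (intro Ck_intros)
      subgoal by (auto intro!: Ck_intros Ck_divide)
      subgoal by simp
      subgoal by simp
      subgoal by (simp add: vec4_eq field_simps)
      subgoal by (simp add: vec4_eq field_simps)
      subgoal using h by simp
      subgoal by (rule axB)
      subgoal by (simp add: inner_ax in_P_iff)
      done
  next
    assume h: "p$3 \<noteq> 0"
    show ?thesis
      apply (rule chart_lemma[where U="{x. x$3 \<noteq> 0}" and V="{x. x$3 \<noteq> 0}"
          and \<phi>="\<lambda>x. vector [x$1, x$1*x$4 - x$2*x$3, x$3, x$4]"
          and \<psi>="\<lambda>y. vector [y$1, (y$1*y$4 - y$2) / y$3, y$3, y$4]" and c="axis 2 1"])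
      subgoal by (rule open_ne)
      subgoal by (rule open_ne)
      subgoal by (intro Ck_intros)
      subgoal by (auto intro!: Ck_intros Ck_divide)
      subgoal by simp
      subgoal by simp
      subgoal by (simp add: vec4_eq field_simps)
      subgoal by (simp add: vec4_eq field_simps)
      subgoal using h by simp
      subgoal by (rule axB)
      subgoal by (simp add: inner_ax in_P_iff)
      done
  next
    assume h: "p$4 \<noteq> 0"
    show ?thesis
      apply (rule chart_lemma[where U="{x. x$4 \<noteq> 0}" and V="{x. x$4 \<noteq> 0}"
          and \<phi>="\<lambda>x. vector [x$1*x$4 - x$2*x$3, x$2, x$3, x$4]"
          and \<psi>="\<lambda>y. vector [(y$1 + y$2*y$3) / y$4, y$2, y$3, y$4]" and c="axis 1 1"])
      subgoal by (rule open_ne)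
      subgoal by (rule open_ne)
      subgoal by (intro Ck_intros)
      subgoal by (auto intro!: Ck_intros Ck_divide)
      subgoal by simp
      subgoal by simp
      subgoal by (simp add: vec4_eq field_simps)
      subgoal by (simp add: vec4_eq field_simps)
      subgoal using h by simp
      subgoal by (rule axB)
      subgoal by (simp add: inner_ax in_P_iff)
      done
  qed
qed

theorem theorem2:
  shows "embedded_lie_group bc_mult bc_one P_set"
  unfolding embedded_lie_group_def
proof (intro conjI exI)
  show "group \<lparr>carrier = P_set, mult = bc_mult, one = bc_one\<rparr>" using group_P by (simp add: GP_def)
  show "embedded_submanifold 3 P_set" by (rule submanifold_P)
  show "P_set \<times> P_set \<subseteq> UNIV" by simp
  show "smooth_on UNIV (\<lambda>p. bc_mult (fst p) (snd p))" by (rule smooth_mult)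
  show "\<forall>x\<in>P_set. \<forall>y\<in>P_set. bc_mult (fst (x, y)) (snd (x, y)) = bc_mult x y" by simp
  show "P_set \<subseteq> {x. bD x \<noteq> 0}" using bD_pos by force
  show "smooth_on {x. bD x \<noteq> 0} bc_inv" by (rule smooth_inv)
  show "\<forall>x\<in>P_set. bc_inv x = inv\<^bsub>\<lparr>carrier = P_set, mult = bc_mult, one = bc_one\<rparr>\<^esub> x"
    using inv_P by (simp add: GP_def)
qed

end
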